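(* Let $Z_1^N$ be as in the context, started at $Z_1^N(0)=\lfloor N/\sqrt{\log N}\rfloor$. Then $$\frac{\varphi_N}{\sqrt{\log N}}\;T^N_{\lfloor N(1-1/\sqrt{\log N})\rfloor}\to0\quad\text{in probability as }N\to\infty.$$
   Context: Standing assumptions: $a>0$, $0<\varphi_N\le1$, and $-\log_N\varphi_N\to b\in[0,1)$ as $N\to\infty$. $Z_1^N$ is a continuous-time Markov chain on $\mathbb N_0$ that jumps from $k$ to $k+1$ at rate $(1+a\varphi_N)k$ and from $k$ to $k-1$ at rate $k$. For $k\in\mathbb N_0$, $T_k^N:=\inf\{t\ge0: Z_1^N(t)=k\}$. *)

theory Defs
  imports "HOL-Probability.Probability"
begin

text \<open>Pathwise construction of the birth-death chain Z jumping k to k+1 at rate (1+c)k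
  and k to k-1 at rate k (here c = a * phi_N), from independent Exp(1) clocks X (n, s):
  in the n-th visited state k > 0 the up clock rings after X (n, True) / ((1+c) k), the
  down clock after X (n, False) / k; the first to ring determines the jump and the
  holding time is their minimum (competing exponential clocks).\<close>

fun bd_chain :: "real \<Rightarrow> nat \<Rightarrow> (nat \<times> bool \<Rightarrow> real) \<Rightarrow> nat \<Rightarrow> nat" where
  "bd_chain c k0 X 0 = k0"
| "bd_chain c k0 X (Suc n) =
     (let k = bd_chain c k0 X n in
      if k = 0 then 0
      else if X (n, True) / ((1 + c) * real k) < X (n, False) / real k then k + 1 else k - 1)"

definition bd_hold :: "real \<Rightarrow> nat \<Rightarrow> (nat \<times> bool \<Rightarrow> real) \<Rightarrow> nat \<Rightarrow> ereal" where
  "bd_hold c k0 X n =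
     (let k = bd_chain c k0 X n in
      if k = 0 then \<infinity>
      else ereal (min (X (n, True) / ((1 + c) * real k)) (X (n, False) / real k)))"

definition bd_jump_time :: "real \<Rightarrow> nat \<Rightarrow> (nat \<times> bool \<Rightarrow> real) \<Rightarrow> nat \<Rightarrow> ereal" where
  "bd_jump_time c k0 X n = (\<Sum>i<n. bd_hold c k0 X i)"

text \<open>The continuous-time path Z(t) (t >= 0); after an explosion (a null event) it is set to 0.\<close>
definition bd_path :: "real \<Rightarrow> nat \<Rightarrow> (nat \<times> bool \<Rightarrow> real) \<Rightarrow> real \<Rightarrow> nat" where
  "bd_path c k0 X t =
     (if \<exists>n. ereal t < bd_jump_time c k0 X (Suc n)
      then bd_chain c k0 X (LEAST n. ereal t < bd_jump_time c k0 X (Suc n))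
      else 0)"

definition bd_hitting_time :: "real \<Rightarrow> nat \<Rightarrow> (nat \<times> bool \<Rightarrow> real) \<Rightarrow> nat \<Rightarrow> ereal" where
  "bd_hitting_time c k0 X k = Inf (ereal ` {t. 0 \<le> t \<and> bd_path c k0 X t = k})"

end

theory Submission
  imports Defs "HOL-Real_Asymp.Real_Asymp"
begin
fun wk :: "real \<Rightarrow> nat \<Rightarrow> nat \<Rightarrow> nat \<Rightarrow> (nat \<times> bool \<Rightarrow> real) \<Rightarrow> nat \<Rightarrow> nat" where
  "wk c L K k0 x 0 = k0"
| "wk c L K k0 x (Suc n) =
    (if L < wk c L K k0 x n \<and> wk c L K k0 x n < K
     then (if x (n,True) < (1+c) * x (n,False) then wk c L K k0 x n + 1 else wk c L K k0 x n - 1)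
     else wk c L K k0 x n)"

lemma wk_range:
  assumes "L \<le> k0" "k0 \<le> K"
  shows "L \<le> wk c L K k0 x n \<and> wk c L K k0 x n \<le> K"
  using assms by (induction n) auto

lemma wk_stop:
  assumes "\<not> (L < wk c L K k0 x n \<and> wk c L K k0 x n < K)"
  shows "wk c L K k0 x (n + d) = wk c L K k0 x n"
  using assms by (induction d) auto

lemma wk_in_mono:
  assumes "L < wk c L K k0 x m \<and> wk c L K k0 x m < K" "j \<le> m"
  shows "L < wk c L K k0 x j \<and> wk c L K k0 x j < K"
proof (rule ccontr)
  assume na: "\<not> (L < wk c L K k0 x j \<and> wk c L K k0 x j < K)"
  have "wk c L K k0 x m = wk c L K k0 x j" using wk_stop[OF na, of "m - j"] assms(2) by simp
  then show False using na assms(1) by simp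
qed

lemma wk_chain:
  assumes "c > -1" "\<forall>j<n. L < wk c L K k0 x j \<and> wk c L K k0 x j < K"
  shows "bd_chain c k0 x n = wk c L K k0 x n"
  using assms
proof (induction n)
  case 0 then show ?case by simp
next
  case (Suc n)
  then have eq: "bd_chain c k0 x n = wk c L K k0 x n" by auto
  have inn: "L < wk c L K k0 x n \<and> wk c L K k0 x n < K" using Suc.prems by auto
  define k where "k = wk c L K k0 x n"
  have kpos: "real k > 0" using inn k_def by auto
  have c1: "1 + c > 0" using Suc.prems by auto
  have "(x (n, True) / ((1 + c) * real k) < x (n, False) / real k) \<longleftrightarrow> x (n,True) < (1+c) * x (n,False)"
  proof -
    have "x (n, True) / ((1 + c) * real k) = (x (n, True) / (1 + c)) / real k" by simp
    then have "(x (n, True) / ((1 + c) * real k) < x (n, False) / real k) \<longleftrightarrow>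
          (x (n, True) / (1 + c)) / real k < x (n, False) / real k" by (simp only:)
    also have "\<dots> \<longleftrightarrow> x (n, True) / (1 + c) < x (n, False)"
      using kpos divide_less_cancel[of "x (n,True)/(1+c)" "real k" "x (n,False)"] by argo
    also have "\<dots> \<longleftrightarrow> x (n,True) < (1+c) * x (n,False)" using c1 by (simp add: pos_divide_less_eq mult.commute)
    finally show ?thesis .
  qed
  then show ?case using eq inn kpos by (simp add: Let_def k_def[symmetric])
qed

lemma wk_hit_bound:
  assumes c: "c > 0" and xpos: "\<And>i. x i > 0" and LK: "L \<le> k0" "k0 \<le> K"
    and hit: "K \<le> wk c L K k0 x m" and Kpos: "K > 0"
  shows "bd_hitting_time c k0 x K \<le>
     ereal (\<Sum>i<m. if L < wk c L K k0 x i \<and> wk c L K k0 x i < K then x (i,False) / real (wk c L K k0 x i) else 0)"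
proof -
  define w where "w = wk c L K k0 x"
  define inn where "inn i \<longleftrightarrow> L < w i \<and> w i < K" for i
  have ex: "\<exists>j. \<not> inn j" using hit by (intro exI[of _ m]) (auto simp: inn_def w_def)
  define s where "s = (LEAST j. \<not> inn j)"
  have s_not: "\<not> inn s" unfolding s_def by (rule LeastI_ex[OF ex])
  have s_m: "s \<le> m" unfolding s_def using hit by (intro Least_le) (auto simp: inn_def w_def)
  have before: "inn i" if "i < s" for i using not_less_Least[OF that[unfolded s_def]] by simp
  have after: "w i = w s" if "s \<le> i" for i
    using wk_stop[of L c K k0 x s "i - s"] s_not that by (auto simp: inn_def w_def)
  have ws: "w s = K" using after[OF s_m] hit wk_range[OF LK, of c x s] by (auto simp: w_def)
  have chain: "bd_chain c k0 x i = w i" if "i \<le> s" for i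
    using wk_chain[of c i L K k0 x] before that c by (auto simp: w_def inn_def)
  have wpos: "w i > 0" if "i \<le> s" for i
    using before[of i] that ws Kpos by (cases "i = s") (auto simp: inn_def)
  define h where "h i = min (x (i, True) / ((1 + c) * real (w i))) (x (i, False) / real (w i))" for i
  have hold: "bd_hold c k0 x i = ereal (h i)" if "i \<le> s" for i
    using chain[OF that] wpos[OF that] by (simp add: bd_hold_def h_def Let_def)
  have hpos: "h i > 0" if "i \<le> s" for i
    using wpos[OF that] xpos[of "(i,True)"] xpos[of "(i,False)"] c by (auto simp: h_def)
  have hnn: "h i \<ge> 0" if "i \<le> s" for i using hpos[OF that] by simp
  have J: "bd_jump_time c k0 x n = ereal (\<Sum>i<n. h i)" if "n \<le> Suc s" for n
    unfolding bd_jump_time_def using that by (subst sum_ereal[symmetric], intro sum.cong) (auto simp: hold)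
  define t0 where "t0 = (\<Sum>i<s. h i)"
  have t0_nn: "t0 \<ge> 0" unfolding t0_def by (intro sum_nonneg) (auto intro!: hnn)
  have lt: "ereal t0 < bd_jump_time c k0 x (Suc s)"
    using J[of "Suc s"] hpos[of s] by (simp add: t0_def)
  have least: "(LEAST n. ereal t0 < bd_jump_time c k0 x (Suc n)) = s"
  proof (rule Least_equality)
    show "ereal t0 < bd_jump_time c k0 x (Suc s)" by (rule lt)
  next
    fix n assume n: "ereal t0 < bd_jump_time c k0 x (Suc n)"
    show "s \<le> n"
    proof (rule ccontr)
      assume "\<not> s \<le> n"
      then have sn: "Suc n \<le> s" by auto
      have "(\<Sum>i<Suc n. h i) \<le> (\<Sum>i<s. h i)"
        using sn by (intro sum_mono2) (auto intro!: hnn)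
      then show False using n J[of "Suc n"] sn by (simp add: t0_def)
    qed
  qed
  have path: "bd_path c k0 x t0 = K"
    unfolding bd_path_def using lt least chain[of s] ws by auto
  have hb: "bd_hitting_time c k0 x K \<le> ereal t0"
    unfolding bd_hitting_time_def using path t0_nn by (intro Inf_lower) auto
  have "t0 \<le> (\<Sum>i<s. x (i,False) / real (w i))"
    unfolding t0_def h_def by (intro sum_mono) auto
  also have "(\<Sum>i<s. x (i,False) / real (w i)) = (\<Sum>i<m. if inn i then x (i,False) / real (w i) else 0)"
  proof -
    have "(\<Sum>i<m. if inn i then x (i,False) / real (w i) else 0) =
          (\<Sum>i<s. if inn i then x (i,False) / real (w i) else 0) + (\<Sum>i=s..<m. if inn i then x (i,False) / real (w i) else 0)"
      using s_m by (metis (no_types, lifting) lessThan_atLeast0 sum.atLeastLessThan_concat zero_le)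
    also have "(\<Sum>i=s..<m. if inn i then x (i,False) / real (w i) else 0) = 0"
      using after ws by (intro sum.neutral) (auto simp: inn_def)
    also have "(\<Sum>i<s. if inn i then x (i,False) / real (w i) else 0) = (\<Sum>i<s. x (i,False) / real (w i))"
      using before by (intro sum.cong) auto
    finally show ?thesis by simp
  qed
  finally have "t0 \<le> (\<Sum>i<m. if inn i then x (i,False) / real (w i) else 0)" .
  then show ?thesis using hb unfolding w_def inn_def by (meson ereal_less_eq(3) order_trans)
qed


lemma wk_measurable:
  assumes "\<And>i. fst i < n \<Longrightarrow> (\<lambda>\<omega>. x \<omega> i) \<in> borel_measurable N"
  shows "(\<lambda>\<omega>. wk c L K k0 (x \<omega>) n) \<in> measurable N (count_space UNIV)"
  using assms
proof (induction n)
  case 0 then show ?case by simp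
next
  case (Suc n)
  have IH[measurable]: "(\<lambda>\<omega>. wk c L K k0 (x \<omega>) n) \<in> measurable N (count_space UNIV)"
    using Suc by auto
  have [measurable]: "(\<lambda>\<omega>. x \<omega> (n,True)) \<in> borel_measurable N" "(\<lambda>\<omega>. x \<omega> (n,False)) \<in> borel_measurable N"
    using Suc.prems by auto
  show ?case by simp measurable
qed

lemma wk_restrict:
  assumes "n \<le> m"
  shows "wk c L K k0 (restrict x {i. fst i < m}) n = wk c L K k0 x n"
  using assms by (induction n) auto

locale walk_setup = prob_space M for M :: "'a measure" +
  fixes X :: "nat \<times> bool \<Rightarrow> 'a \<Rightarrow> real" and c :: real and L K k0 :: nat
  assumes indep: "indep_vars (\<lambda>_. borel) X UNIV"
    and expo: "\<And>i. distributed M lborel (X i) (exponential_density 1)"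
    and c_pos: "c > 0" and LK: "L \<le> k0" "k0 \<le> K"
begin

definition W :: "nat \<Rightarrow> 'a \<Rightarrow> nat" where
  "W n \<omega> = wk c L K k0 (\<lambda>i. X i \<omega>) n"

lemma X_meas[measurable]: "X i \<in> borel_measurable M"
  using distributed_measurable[OF expo[of i]] by simp

lemma W_meas[measurable]: "W n \<in> measurable M (count_space UNIV)"
  unfolding W_def by (rule wk_measurable) simp

lemma W_range: "L \<le> W n \<omega> \<and> W n \<omega> \<le> K"
  unfolding W_def using wk_range[OF LK] by blast

lemma fW_integrable: "integrable M (\<lambda>\<omega>. f (W n \<omega>) :: real)"
proof (rule integrable_const_bound[where B="\<Sum>k\<le>K. \<bar>f k\<bar>"])
  show "AE \<omega> in M. norm (f (W n \<omega>)) \<le> (\<Sum>k\<le>K. \<bar>f k\<bar>)"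
  proof (intro AE_I2)
    fix \<omega>
    have "W n \<omega> \<in> {..K}" using W_range by auto
    then show "norm (f (W n \<omega>)) \<le> (\<Sum>k\<le>K. \<bar>f k\<bar>)"
      using member_le_sum[of "W n \<omega>" "{..K}" "\<lambda>k. \<bar>f k\<bar>"] by auto
  qed
qed simp

lemma indep_step:
  fixes g :: "(nat \<times> bool \<Rightarrow> real) \<Rightarrow> real"
  assumes g[measurable]: "g \<in> borel_measurable (PiM {i. fst i = n} (\<lambda>_. borel))"
    and gi: "integrable M (\<lambda>\<omega>. g (restrict (\<lambda>i. X i \<omega>) {i. fst i = n}))"
  shows "(\<integral>\<omega>. f (W n \<omega>) * g (restrict (\<lambda>i. X i \<omega>) {i. fst i = n}) \<partial>M) =
         (\<integral>\<omega>. f (W n \<omega>) \<partial>M) * (\<integral>\<omega>. g (restrict (\<lambda>i. X i \<omega>) {i. fst i = n}) \<partial>M)"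
proof -
  let ?A = "{i :: nat \<times> bool. fst i < n}" and ?B = "{i :: nat \<times> bool. fst i = n}"
  have ind: "indep_var (PiM ?A (\<lambda>_. borel)) (\<lambda>\<omega>. restrict (\<lambda>i. X i \<omega>) ?A)
                       (PiM ?B (\<lambda>_. borel)) (\<lambda>\<omega>. restrict (\<lambda>i. X i \<omega>) ?B)"
    by (rule indep_var_restrict[OF indep]) auto
  have m1: "(\<lambda>y. f (wk c L K k0 y n)) \<in> borel_measurable (PiM ?A (\<lambda>_. borel))"
  proof -
    have "(\<lambda>y. wk c L K k0 y n) \<in> measurable (PiM ?A (\<lambda>_. borel)) (count_space UNIV)"
      by (rule wk_measurable[where x="\<lambda>y. y"]) (auto intro: measurable_component_singleton)
    then show ?thesis by (rule measurable_compose) simp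
  qed
  have ind2: "indep_var borel ((\<lambda>y. f (wk c L K k0 y n)) \<circ> (\<lambda>\<omega>. restrict (\<lambda>i. X i \<omega>) ?A))
                        borel (g \<circ> (\<lambda>\<omega>. restrict (\<lambda>i. X i \<omega>) ?B))"
    by (rule indep_var_compose[OF ind m1 g])
  have eq: "((\<lambda>y. f (wk c L K k0 y n)) \<circ> (\<lambda>\<omega>. restrict (\<lambda>i. X i \<omega>) ?A)) = (\<lambda>\<omega>. f (W n \<omega>))"
    using wk_restrict[of n n c L K k0] by (auto simp: W_def fun_eq_iff)
  show ?thesis
    using indep_var_lebesgue_integral[OF ind2[unfolded eq] fW_integrable[of f n]] gi
    by (simp add: comp_def)
qed

lemma X_integrable: "integrable M (X i)"
  using erlang_ith_moment_integrable[OF _ expo[of i], of 1] by simp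

lemma X_expect: "(\<integral>\<omega>. X i \<omega> \<partial>M) = 1"
  using exponential_distributed_expectation[OF _ expo[of i]] by simp

lemma X_pos_AE: "AE \<omega> in M. \<forall>i. X i \<omega> > 0"
proof -
  have "AE \<omega> in M. X i \<omega> > 0" for i
  proof -
    have "prob {\<omega> \<in> space M. X i \<omega> \<le> 0} = 0"
      using exponential_distributedD_le[OF expo[of i], of 0] by simp
    then show ?thesis
      by (intro AE_I[where N="{\<omega> \<in> space M. X i \<omega> \<le> 0}"])
         (auto simp: emeasure_eq_measure)
  qed
  then show ?thesis by (simp add: AE_all_countable)
qed

lemma X_point_null: "emeasure M {\<omega> \<in> space M. X i \<omega> = t} = 0"
proof -
  have "emeasure M {\<omega> \<in> space M. X i \<omega> = t} = emeasure (distr M lborel (X i)) {t}"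
    by (subst emeasure_distr) (auto intro!: arg_cong[where f="emeasure M"])
  also have "\<dots> = emeasure (density lborel (\<lambda>x. ennreal (exponential_density 1 x))) {t}"
    using expo[of i] unfolding distributed_def by simp
  also have "\<dots> = 0"
    by (subst emeasure_density) auto
  finally show ?thesis .
qed

lemma X_ge: "t \<ge> 0 \<Longrightarrow> emeasure M {\<omega> \<in> space M. t \<le> X i \<omega>} = ennreal (exp (- t))"
proof -
  assume t: "t \<ge> 0"
  have "{\<omega> \<in> space M. t \<le> X i \<omega>} = {\<omega> \<in> space M. t < X i \<omega>} \<union> {\<omega> \<in> space M. X i \<omega> = t}"
    by auto
  then have "emeasure M {\<omega> \<in> space M. t \<le> X i \<omega>} =
      emeasure M {\<omega> \<in> space M. t < X i \<omega>} + emeasure M {\<omega> \<in> space M. X i \<omega> = t}"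
    by (simp, intro plus_emeasure[symmetric]) auto
  also have "\<dots> = ennreal (exp (- t))"
    using exponential_distributedD_gt[OF expo[of i] t] X_point_null[of i t]
    by (simp add: emeasure_eq_measure)
  finally show ?thesis .
qed

lemma prob_down: "prob {\<omega> \<in> space M. (1+c) * X (n,False) \<omega> \<le> X (n,True) \<omega>} = 1 / (2 + c)"
proof -
  define Y where "Y = X (n,False)"
  define Z where "Z = X (n,True)"
  have [measurable]: "Y \<in> borel_measurable M" "Z \<in> borel_measurable M" by (auto simp: Y_def Z_def)
  have ind0: "indep_var (PiM {(n,False)} (\<lambda>_. borel)) (\<lambda>\<omega>. restrict (\<lambda>i. X i \<omega>) {(n,False)})
                        (PiM {(n,True)} (\<lambda>_. borel)) (\<lambda>\<omega>. restrict (\<lambda>i. X i \<omega>) {(n,True)})"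
    by (rule indep_var_restrict[OF indep]) auto
  have "indep_var borel ((\<lambda>y. y (n,False)) \<circ> (\<lambda>\<omega>. restrict (\<lambda>i. X i \<omega>) {(n,False)}))
                   borel ((\<lambda>y. y (n,True)) \<circ> (\<lambda>\<omega>. restrict (\<lambda>i. X i \<omega>) {(n,True)}))"
    by (rule indep_var_compose[OF ind0]) (auto intro: measurable_component_singleton)
  then have ind: "indep_var borel Y borel Z" by (simp add: comp_def Y_def Z_def)
  define f where "f x = ennreal (exponential_density 1 x)" for x
  have dY: "distr M borel Y = density lborel f"
  proof -
    have "distr M borel Y = distr M lborel Y" by (rule distr_cong) auto
    then show ?thesis using expo[of "(n,False)"] unfolding distributed_def Y_def f_def by simp
  qed
  have fm: "f \<in> borel_measurable borel"
    using expo[of "(n,False)"] unfolding distributed_def f_def by simp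
  have pz: "prob_space (distr M borel Z)" by (rule prob_space_distr) simp
  then interpret Z: sigma_finite_measure "distr M borel Z" by (rule prob_space_imp_sigma_finite)
  define S where "S = {p :: real \<times> real. (1+c) * fst p \<le> snd p}"
  have S[measurable]: "S \<in> sets (borel \<Otimes>\<^sub>M borel)"
  proof -
    have "Measurable.pred (borel \<Otimes>\<^sub>M borel) (\<lambda>p :: real \<times> real. (1+c) * fst p \<le> snd p)" by measurable
    moreover have "S = {p \<in> space (borel \<Otimes>\<^sub>M borel). (1+c) * fst p \<le> snd p}"
      by (auto simp: S_def space_pair_measure)
    ultimately show ?thesis unfolding pred_def by (simp only:)
  qed
  have YZm: "(\<lambda>\<omega>. (Y \<omega>, Z \<omega>)) \<in> measurable M (borel \<Otimes>\<^sub>M borel)" by measurable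
  have "emeasure M {\<omega> \<in> space M. (1+c) * Y \<omega> \<le> Z \<omega>} = emeasure (distr M (borel \<Otimes>\<^sub>M borel) (\<lambda>\<omega>. (Y \<omega>, Z \<omega>))) S"
    unfolding emeasure_distr[OF YZm S] by (auto simp: S_def intro!: arg_cong[where f="emeasure M"])
  also have "\<dots> = emeasure (distr M borel Y \<Otimes>\<^sub>M distr M borel Z) S"
    using ind unfolding indep_var_distribution_eq by simp
  also have "\<dots> = (\<integral>\<^sup>+y. emeasure (distr M borel Z) (Pair y -` S) \<partial>distr M borel Y)"
    by (rule Z.emeasure_pair_measure_alt) (simp add: S)
  also have "\<dots> = (\<integral>\<^sup>+y. f y * emeasure (distr M borel Z) (Pair y -` S) \<partial>lborel)"
    unfolding dY using fm by (subst nn_integral_density) auto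
  also have "\<dots> = (\<integral>\<^sup>+y. ennreal (1 / (2 + c)) * ennreal (exponential_density (2 + c) y) \<partial>lborel)"
  proof (intro nn_integral_cong)
    fix y :: real
    show "f y * emeasure (distr M borel Z) (Pair y -` S) = ennreal (1 / (2 + c)) * ennreal (exponential_density (2 + c) y)"
    proof (cases "y < 0")
      case True then show ?thesis by (simp add: f_def exponential_density_def)
    next
      case False
      have "emeasure (distr M borel Z) (Pair y -` S) = emeasure M {\<omega> \<in> space M. (1+c) * y \<le> Z \<omega>}"
        by (subst emeasure_distr) (auto simp: S_def intro!: arg_cong[where f="emeasure M"])
      also have "\<dots> = ennreal (exp (- ((1+c) * y)))"
        unfolding Z_def using False c_pos by (intro X_ge) auto
      finally have e: "emeasure (distr M borel Z) (Pair y -` S) = ennreal (exp (- ((1+c) * y)))" .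
      have "exp (- y) * exp (- ((1 + c) * y)) = exp (- y * (2 + c))"
        by (simp add: mult_exp_exp algebra_simps)
      also have "\<dots> = 1 / (2 + c) * ((2 + c) * exp (- y * (2 + c)))"
        using c_pos by simp
      finally have "exp (- y) * exp (- ((1 + c) * y)) = 1 / (2 + c) * ((2 + c) * exp (- y * (2 + c)))" .
      then show ?thesis using False c_pos
        by (simp add: e f_def exponential_density_def ennreal_mult''[symmetric] del: ennreal_mult'')
    qed
  qed
  also have "\<dots> = ennreal (1 / (2 + c)) * (\<integral>\<^sup>+y. ennreal (exponential_density (2 + c) y) \<partial>lborel)"
    by (rule nn_integral_cmult) simp
  also have "(\<integral>\<^sup>+y. ennreal (exponential_density (2 + c) y) \<partial>lborel) = 1"
  proof -
    have "prob_space (density lborel (exponential_density (2 + c)))"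
      using c_pos by (intro prob_space_exponential_density) simp
    then have "emeasure (density lborel (exponential_density (2 + c))) UNIV = 1"
      using prob_space.emeasure_space_1 by fastforce
    then show ?thesis by (simp add: emeasure_density)
  qed
  finally have "emeasure M {\<omega> \<in> space M. (1+c) * Y \<omega> \<le> Z \<omega>} = ennreal (1 / (2 + c))" by simp
  then show ?thesis using c_pos by (simp add: emeasure_eq_measure Y_def Z_def)
qed

definition pp :: real where "pp = (1 + c) / (2 + c)"
definition dl :: real where "dl = c / (2 + c)"
definition Ew :: "nat \<Rightarrow> (nat \<Rightarrow> real) \<Rightarrow> real" where
  "Ew n f = (\<integral>\<omega>. f (W n \<omega>) \<partial>M)"
definition Gen :: "(nat \<Rightarrow> real) \<Rightarrow> nat \<Rightarrow> real" where
  "Gen f k = (if L < k \<and> k < K then pp * f (k + 1) + (1 - pp) * f (k - 1) else f k)"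

lemma pp_dl: "dl = 2 * pp - 1" "0 < dl" "dl < 1" "0 < pp" "pp < 1"
  using c_pos by (auto simp: pp_def dl_def field_simps)

lemma prob_W: "measure M {\<omega> \<in> space M. P (W n \<omega>)} = Ew n (\<lambda>k. if P k then 1 else 0)"
proof -
  have "Ew n (\<lambda>k. if P k then 1 else 0) = (\<integral>\<omega>. indicator {\<omega> \<in> space M. P (W n \<omega>)} \<omega> \<partial>M)"
    unfolding Ew_def by (intro Bochner_Integration.integral_cong) (auto simp: indicator_def)
  also have "\<dots> = measure M {\<omega> \<in> space M. P (W n \<omega>)}"
    by (simp add: Int_absorb2 subset_iff)
  finally show ?thesis by simp
qed

lemma Ew_0: "Ew 0 f = f k0"
  unfolding Ew_def W_def by (simp add: prob_space)

lemma Ew_mono: "(\<And>k. L \<le> k \<Longrightarrow> k \<le> K \<Longrightarrow> f k \<le> g k) \<Longrightarrow> Ew n f \<le> Ew n g"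
  unfolding Ew_def using W_range by (intro integral_mono fW_integrable) auto

lemma Ew_cong: "(\<And>k. L \<le> k \<Longrightarrow> k \<le> K \<Longrightarrow> f k = g k) \<Longrightarrow> Ew n f = Ew n g"
  unfolding Ew_def using W_range by (intro Bochner_Integration.integral_cong) auto

lemma Ew_add: "Ew n (\<lambda>k. f k + g k) = Ew n f + Ew n g"
  unfolding Ew_def by (intro Bochner_Integration.integral_add fW_integrable)

lemma Ew_cmult: "Ew n (\<lambda>k. a * f k) = a * Ew n f"
  unfolding Ew_def by simp

lemma E_up: "(\<integral>\<omega>. (if X (n,True) \<omega> < (1+c) * X (n,False) \<omega> then 1 else 0 :: real) \<partial>M) = pp"
proof -
  define D where "D = {\<omega> \<in> space M. (1+c) * X (n,False) \<omega> \<le> X (n,True) \<omega>}"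
  have "(\<integral>\<omega>. (if X (n,True) \<omega> < (1+c) * X (n,False) \<omega> then 1 else 0 :: real) \<partial>M) =
        (\<integral>\<omega>. 1 - indicator D \<omega> \<partial>M)"
    by (intro Bochner_Integration.integral_cong) (auto simp: D_def indicator_def)
  also have "\<dots> = 1 - measure M D"
  proof -
    have Ds: "D \<in> sets M" unfolding D_def by measurable
    have "integrable M (indicator D :: 'a \<Rightarrow> real)"
      using Ds by (intro integrable_real_indicator) (auto simp: emeasure_eq_measure)
    then show ?thesis
      by (subst Bochner_Integration.integral_diff) (auto simp: D_def Int_absorb2 subset_iff prob_space)
  qed
  also have "\<dots> = pp" using prob_down[of n] c_pos unfolding D_def pp_def by (simp add: field_simps)
  finally show ?thesis .
qed

lemma Ew_step: "Ew (Suc n) f = Ew n (Gen f)"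
proof -
  define h1 where "h1 k = (if L < k \<and> k < K then f (k - 1) else f k)" for k
  define h2 where "h2 k = (if L < k \<and> k < K then f (k + 1) - f (k - 1) else 0)" for k
  define g where "g y = (if y (n,True) < (1+c) * y (n,False) then 1 else 0 :: real)" for y :: "nat \<times> bool \<Rightarrow> real"
  have gm: "g \<in> borel_measurable (PiM {i. fst i = n} (\<lambda>_. borel))"
  proof -
    have [measurable]: "(\<lambda>y. y (n,True)) \<in> borel_measurable (PiM {i :: nat \<times> bool. fst i = n} (\<lambda>_. borel))"
                       "(\<lambda>y. y (n,False)) \<in> borel_measurable (PiM {i :: nat \<times> bool. fst i = n} (\<lambda>_. borel))"
      by (auto intro!: measurable_component_singleton)
    show ?thesis unfolding g_def by measurable
  qed
  have gX: "g (restrict (\<lambda>i. X i \<omega>) {i. fst i = n}) = (if X (n,True) \<omega> < (1+c) * X (n,False) \<omega> then 1 else 0)" for \<omega>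
    by (simp add: g_def)
  have gi: "integrable M (\<lambda>\<omega>. g (restrict (\<lambda>i. X i \<omega>) {i. fst i = n}))"
    unfolding gX by (intro integrable_const_bound[where B=1]) auto
  have pw: "f (W (Suc n) \<omega>) = h1 (W n \<omega>) + h2 (W n \<omega>) * g (restrict (\<lambda>i. X i \<omega>) {i. fst i = n})" for \<omega>
    unfolding gX by (auto simp: W_def h1_def h2_def)
  have "Ew (Suc n) f = (\<integral>\<omega>. h1 (W n \<omega>) + h2 (W n \<omega>) * g (restrict (\<lambda>i. X i \<omega>) {i. fst i = n}) \<partial>M)"
    unfolding Ew_def pw ..
  also have "\<dots> = Ew n h1 + (\<integral>\<omega>. h2 (W n \<omega>) * g (restrict (\<lambda>i. X i \<omega>) {i. fst i = n}) \<partial>M)"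
    unfolding Ew_def
  proof (intro Bochner_Integration.integral_add fW_integrable)
    show "integrable M (\<lambda>\<omega>. h2 (W n \<omega>) * g (restrict (\<lambda>i. X i \<omega>) {i. fst i = n}))"
    proof (rule integrable_const_bound[where B="\<Sum>k\<le>K. \<bar>h2 k\<bar>"])
      show "AE \<omega> in M. norm (h2 (W n \<omega>) * g (restrict (\<lambda>i. X i \<omega>) {i. fst i = n})) \<le> (\<Sum>k\<le>K. \<bar>h2 k\<bar>)"
      proof (intro AE_I2)
        fix \<omega>
        have "W n \<omega> \<in> {..K}" using W_range by auto
        then have "\<bar>h2 (W n \<omega>)\<bar> \<le> (\<Sum>k\<le>K. \<bar>h2 k\<bar>)"
          using member_le_sum[of "W n \<omega>" "{..K}" "\<lambda>k. \<bar>h2 k\<bar>"] by auto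
        then show "norm (h2 (W n \<omega>) * g (restrict (\<lambda>i. X i \<omega>) {i. fst i = n})) \<le> (\<Sum>k\<le>K. \<bar>h2 k\<bar>)"
          unfolding gX by auto
      qed
    qed (simp add: gX)
  qed
  also have "(\<integral>\<omega>. h2 (W n \<omega>) * g (restrict (\<lambda>i. X i \<omega>) {i. fst i = n}) \<partial>M) = Ew n h2 * pp"
    unfolding Ew_def indep_step[OF gm gi] unfolding gX E_up ..
  also have "Ew n h1 + Ew n h2 * pp = Ew n (\<lambda>k. h1 k + pp * h2 k)"
    by (simp add: Ew_add Ew_cmult)
  also have "\<dots> = Ew n (Gen f)"
    by (intro Ew_cong) (auto simp: h1_def h2_def Gen_def algebra_simps)
  finally show ?thesis .
qed

lemma Ew_XF: "(\<integral>\<omega>. X (n,False) \<omega> * f (W n \<omega>) \<partial>M) = Ew n f"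
proof -
  define g where "g y = y (n,False)" for y :: "nat \<times> bool \<Rightarrow> real"
  have gm: "g \<in> borel_measurable (PiM {i. fst i = n} (\<lambda>_. borel))"
    unfolding g_def by (auto intro!: measurable_component_singleton)
  have gX: "g (restrict (\<lambda>i. X i \<omega>) {i. fst i = n}) = X (n,False) \<omega>" for \<omega>
    by (simp add: g_def)
  have gi: "integrable M (\<lambda>\<omega>. g (restrict (\<lambda>i. X i \<omega>) {i. fst i = n}))"
    unfolding gX by (rule X_integrable)
  show ?thesis
    using indep_step[OF gm gi, of f] unfolding gX X_expect Ew_def by (simp add: mult.commute)
qed

lemma Ew_const: "Ew n (\<lambda>_. a) = a"
  unfolding Ew_def by (simp add: prob_space)

lemma Ew_harm: "Ew n (\<lambda>k. (1 / (1 + c)) ^ k) = (1 / (1 + c)) ^ k0"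
proof (induction n)
  case 0 then show ?case by (simp add: Ew_0)
next
  case (Suc n)
  have "Ew (Suc n) (\<lambda>k. (1 / (1 + c)) ^ k) = Ew n (Gen (\<lambda>k. (1 / (1 + c)) ^ k))" by (rule Ew_step)
  also have "\<dots> = Ew n (\<lambda>k. (1 / (1 + c)) ^ k)"
  proof (intro Ew_cong)
    fix k assume k: "L \<le> k" "k \<le> K"
    show "Gen (\<lambda>k. (1 / (1 + c)) ^ k) k = (1 / (1 + c)) ^ k"
    proof (cases "L < k \<and> k < K")
      case True
      then obtain j where j: "k = Suc j" by (cases k) auto
      have "pp * (1 / (1 + c)) ^ (Suc j + 1) + (1 - pp) * (1 / (1 + c)) ^ j =
            (1 / (1 + c)) ^ j * (pp * (1 / (1 + c))^2 + (1 - pp))"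
        by (simp add: algebra_simps power2_eq_square)
      also have "pp * (1 / (1 + c))^2 + (1 - pp) = 1 / (1 + c)"
      proof -
        have cc: "0 \<le> c * c" by simp
        have nz: "1 + c \<noteq> 0" "2 + c \<noteq> 0" "c * c + (2 + c * 3) \<noteq> 0" using c_pos cc by linarith+
        have a1: "pp * (1 / (1 + c))^2 = 1 / ((2 + c) * (1 + c))"
          using nz by (simp add: pp_def power2_eq_square)
        have a2: "1 - pp = 1 / (2 + c)" using nz by (simp add: pp_def field_simps)
        have a3: "1 / ((2 + c) * (1 + c)) + 1 / (2 + c) = 1 / (1 + c)"
        proof -
          have "1 / ((2 + c) * (1 + c)) + 1 / (2 + c) = 1 / ((2 + c) * (1 + c)) + (1 + c) / ((2 + c) * (1 + c))"
            using nz by simp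
          also have "\<dots> = (1 + (1 + c)) / ((2 + c) * (1 + c))" by (rule add_divide_distrib[symmetric])
          also have "\<dots> = (2 + c) / ((2 + c) * (1 + c))" by simp
          also have "\<dots> = 1 / (1 + c)" using nz by simp
          finally show ?thesis .
        qed
        show ?thesis using a1 a2 a3 by simp
      qed
      finally show ?thesis using True j by (simp add: Gen_def)
    qed (auto simp: Gen_def)
  qed
  finally show ?case using Suc by simp
qed

lemma dip_bound: "measure M {\<omega> \<in> space M. W m \<omega> \<le> L} \<le> (1 / (1 + c)) ^ (k0 - L)"
proof -
  define r where "r = 1 / (1 + c)"
  have r: "0 < r" "r \<le> 1" using c_pos by (auto simp: r_def)
  have "measure M {\<omega> \<in> space M. W m \<omega> \<le> L} = Ew m (\<lambda>k. if k \<le> L then 1 else 0)" by (rule prob_W)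
  also have "\<dots> \<le> Ew m (\<lambda>k. r ^ k / r ^ L)"
  proof (intro Ew_mono)
    fix k assume "L \<le> k" "k \<le> K"
    show "(if k \<le> L then 1 else 0) \<le> r ^ k / r ^ L"
      using r by (auto simp: power_decreasing)
  qed
  also have "\<dots> = r ^ k0 / r ^ L"
    using Ew_harm[of m] Ew_cmult[of m "1 / r ^ L" "\<lambda>k. r ^ k"] by (simp add: r_def)
  also have "\<dots> = r ^ (k0 - L)" using r LK by (simp add: power_diff)
  finally show ?thesis by (simp add: r_def)
qed

definition ind_in :: "nat \<Rightarrow> real" where "ind_in k = (if L < k \<and> k < K then 1 else 0)"

lemma Ew_lin: "Ew n real = real k0 + dl * (\<Sum>j<n. Ew j ind_in)"
proof (induction n)
  case 0 then show ?case by (simp add: Ew_0)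
next
  case (Suc n)
  have "Ew (Suc n) real = Ew n (Gen real)" by (rule Ew_step)
  also have "\<dots> = Ew n (\<lambda>k. real k + dl * ind_in k)"
  proof (intro Ew_cong)
    fix k assume "L \<le> k" "k \<le> K"
    show "Gen real k = real k + dl * ind_in k"
    proof (cases "L < k \<and> k < K")
      case True
      then have "k \<ge> 1" by auto
      then have "real (k - 1) = real k - 1" by simp
      then show ?thesis using True pp_dl(1) by (simp add: Gen_def ind_in_def algebra_simps)
    qed (auto simp: Gen_def ind_in_def)
  qed
  also have "\<dots> = Ew n real + dl * Ew n ind_in" by (simp add: Ew_add Ew_cmult)
  finally show ?case using Suc by (simp add: distrib_left)
qed

lemma stuck_bound:
  assumes m: "m > 0"
  shows "measure M {\<omega> \<in> space M. L < W m \<omega> \<and> W m \<omega> < K} \<le> real K / (dl * real m)"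
proof -
  define P where "P = Ew m ind_in"
  have P: "measure M {\<omega> \<in> space M. L < W m \<omega> \<and> W m \<omega> < K} = P"
    unfolding P_def ind_in_def[abs_def] by (rule prob_W)
  have le: "P \<le> Ew j ind_in" if "j \<le> m" for j
    unfolding P_def Ew_def
  proof (intro integral_mono fW_integrable)
    fix \<omega> show "ind_in (W m \<omega>) \<le> ind_in (W j \<omega>)"
      using wk_in_mono[of L c K k0 "\<lambda>i. X i \<omega>" m j] that by (auto simp: ind_in_def W_def)
  qed
  have "real m * P \<le> (\<Sum>j<m. Ew j ind_in)"
    using sum_mono[of "{..<m}" "\<lambda>_. P" "\<lambda>j. Ew j ind_in"] le by simp
  also have "dl * (\<Sum>j<m. Ew j ind_in) = Ew m real - real k0" using Ew_lin[of m] by simp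
  also have "Ew m real \<le> Ew m (\<lambda>_. real K)" by (intro Ew_mono) auto
  finally have "dl * (real m * P) \<le> real K - real k0"
    using pp_dl(2) Ew_const[of m "real K"] by (smt (verit) mult_left_mono)
  then have "dl * real m * P \<le> real K" by simp
  then show ?thesis using P pp_dl(2) m by (simp add: field_simps mult.commute)
qed

definition fin :: "nat \<Rightarrow> real" where "fin k = (if L < k \<and> k < K then 1 / real k else 0)"

lemma log_ineq:
  fixes k :: nat
  assumes k: "4 \<le> dl * real k"
  shows "ln (real k) + dl / 2 * (1 / real k) \<le> pp * ln (real (k + 1)) + (1 - pp) * ln (real (k - 1))"
proof -
  have "dl * real k \<le> real k" using pp_dl(2,3) by (intro mult_left_le_one_le) auto
  then have k5: "real k \<ge> 4" using k by linarith
  then have k1: "k \<ge> 1" by simp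
  define x where "x = 1 / real k"
  have x: "0 \<le> x" "x \<le> 1/2" using k5 by (auto simp: x_def field_simps)
  have xdl: "x \<le> dl / 4" using k k5 by (simp add: x_def field_simps)
  have e1: "ln (real (k + 1)) = ln (real k) + ln (1 + x)"
  proof -
    have "real (k + 1) = real k * (1 + x)" using k5 by (simp add: x_def field_simps)
    moreover have "1 + x > 0" using x by simp
    ultimately show ?thesis using k5 by (simp add: ln_mult)
  qed
  have e2: "ln (real (k - 1)) = ln (real k) + ln (1 - x)"
  proof -
    have "real (k - 1) = real k * (1 - x)" using k1 k5 by (simp add: x_def field_simps of_nat_diff)
    moreover have "1 - x > 0" using x by simp
    ultimately show ?thesis using k5 by (simp add: ln_mult)
  qed
  have l1: "x - x\<^sup>2 \<le> ln (1 + x)" using x by (intro ln_one_plus_pos_lower_bound) auto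
  have l2: "- x - 2 * x\<^sup>2 \<le> ln (1 - x)" using x by (intro ln_one_minus_pos_lower_bound) auto
  have "pp * (x - x\<^sup>2) + (1 - pp) * (- x - 2 * x\<^sup>2) \<le> pp * ln (1 + x) + (1 - pp) * ln (1 - x)"
    using l1 l2 pp_dl by (intro add_mono mult_left_mono) auto
  moreover have "pp * (x - x\<^sup>2) + (1 - pp) * (- x - 2 * x\<^sup>2) = (2 * pp - 1) * x - (2 - pp) * x\<^sup>2"
    using pp_dl(1) by (simp add: algebra_simps power2_eq_square)
  moreover have "(2 - pp) * x\<^sup>2 \<le> 2 * x\<^sup>2" using pp_dl x by (intro mult_right_mono) auto
  moreover have "2 * x\<^sup>2 \<le> dl / 2 * x"
  proof -
    have "(4 * x) * x \<le> dl * x" using xdl x by (intro mult_right_mono) auto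
    then show ?thesis by (simp add: power2_eq_square)
  qed
  moreover have "(2 * pp - 1) * x = dl * x" using pp_dl(1) by simp
  ultimately have "dl / 2 * x \<le> pp * ln (1 + x) + (1 - pp) * ln (1 - x)" by linarith
  then show ?thesis unfolding e1 e2 x_def by (simp add: algebra_simps)
qed

lemma Ew_log_step:
  assumes "4 \<le> dl * real L"
  shows "Ew n (\<lambda>k. ln (real k)) + dl / 2 * Ew n fin \<le> Ew (Suc n) (\<lambda>k. ln (real k))"
proof -
  have "Ew n (\<lambda>k. ln (real k)) + dl / 2 * Ew n fin = Ew n (\<lambda>k. ln (real k) + dl / 2 * fin k)"
    using Ew_add[of n "\<lambda>k. ln (real k)" "\<lambda>k. dl / 2 * fin k"] Ew_cmult[of n "dl / 2" fin] by simp
  also have "\<dots> \<le> Ew n (Gen (\<lambda>k. ln (real k)))"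
  proof (intro Ew_mono)
    fix k assume "L \<le> k" "k \<le> K"
    show "ln (real k) + dl / 2 * fin k \<le> Gen (\<lambda>k. ln (real k)) k"
    proof (cases "L < k \<and> k < K")
      case True
      then have "4 \<le> dl * real k" using assms pp_dl(2)
        by (smt (verit, best) mult_left_mono of_nat_less_iff)
      then show ?thesis using log_ineq[of k] True by (simp add: Gen_def fin_def)
    qed (auto simp: Gen_def fin_def)
  qed
  also have "\<dots> = Ew (Suc n) (\<lambda>k. ln (real k))" by (rule Ew_step[symmetric])
  finally show ?thesis .
qed

lemma S_integrable: "integrable M (\<lambda>\<omega>. X (j,False) \<omega> * fin (W j \<omega>))"
proof (rule Bochner_Integration.integrable_bound[OF X_integrable[of "(j,False)"]])
  show "(\<lambda>\<omega>. X (j,False) \<omega> * fin (W j \<omega>)) \<in> borel_measurable M" by measurable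
  show "AE \<omega> in M. norm (X (j,False) \<omega> * fin (W j \<omega>)) \<le> norm (X (j,False) \<omega>)"
  proof (intro AE_I2)
    fix \<omega>
    have "\<bar>fin (W j \<omega>)\<bar> \<le> 1" by (auto simp: fin_def)
    then show "norm (X (j,False) \<omega> * fin (W j \<omega>)) \<le> norm (X (j,False) \<omega>)"
      by (simp add: abs_mult mult_left_le)
  qed
qed

lemma S_expect:
  assumes "4 \<le> dl * real L" "1 \<le> L"
  shows "(\<integral>\<omega>. (\<Sum>j<m. X (j,False) \<omega> * fin (W j \<omega>)) \<partial>M) \<le> 2 / dl * (ln (real K) - ln (real k0))"
proof -
  have "(\<integral>\<omega>. (\<Sum>j<m. X (j,False) \<omega> * fin (W j \<omega>)) \<partial>M) = (\<Sum>j<m. Ew j fin)"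
    by (subst Bochner_Integration.integral_sum) (auto intro: S_integrable simp: Ew_XF)
  also have "\<dots> \<le> (\<Sum>j<m. 2 / dl * (Ew (Suc j) (\<lambda>k. ln (real k)) - Ew j (\<lambda>k. ln (real k))))"
  proof (intro sum_mono)
    fix j
    have "dl / 2 * Ew j fin \<le> Ew (Suc j) (\<lambda>k. ln (real k)) - Ew j (\<lambda>k. ln (real k))"
      using Ew_log_step[OF assms(1), of j] by simp
    then show "Ew j fin \<le> 2 / dl * (Ew (Suc j) (\<lambda>k. ln (real k)) - Ew j (\<lambda>k. ln (real k)))"
      using pp_dl(2) by (simp add: field_simps)
  qed
  also have "\<dots> = 2 / dl * (Ew m (\<lambda>k. ln (real k)) - ln (real k0))"
    by (subst sum_distrib_left[symmetric], subst sum_lessThan_telescope[of "\<lambda>j. Ew j (\<lambda>k. ln (real k))" m])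
       (simp add: Ew_0)
  also have "Ew m (\<lambda>k. ln (real k)) \<le> Ew m (\<lambda>_. ln (real K))"
    using assms(2) by (intro Ew_mono) auto
  finally show ?thesis using pp_dl(2) Ew_const[of m "ln (real K)"]
    by (smt (verit, ccfv_SIG) divide_pos_pos mult_left_mono)
qed

lemma main_bound:
  assumes L1: "1 \<le> L" and Ldl: "4 \<le> dl * real L" and Kpos: "0 < K" and al: "\<alpha> > 0" and ep: "\<epsilon> > 0"
  shows "measure M {\<omega> \<in> space M. ereal \<epsilon> < ereal \<alpha> * bd_hitting_time c k0 (\<lambda>i. X i \<omega>) K}
           \<le> (1 / (1 + c)) ^ (k0 - L) + 2 / dl * (ln (real K) - ln (real k0)) * \<alpha> / \<epsilon>"
proof -
  define B where "B = {\<omega> \<in> space M. ereal \<epsilon> < ereal \<alpha> * bd_hitting_time c k0 (\<lambda>i. X i \<omega>) K}"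
  define A where "A = (1 / (1 + c)) ^ (k0 - L)"
  define G where "G = 2 / dl * (ln (real K) - ln (real k0))"
  have key: "measure M B \<le> A + real K / (dl * real m) + G * \<alpha> / \<epsilon>" if m: "m > 0" for m
  proof -
    define S where "S \<omega> = (\<Sum>j<m. X (j,False) \<omega> * fin (W j \<omega>))" for \<omega>
    define N0 where "N0 = {\<omega> \<in> space M. \<exists>i. X i \<omega> \<le> 0}"
    define D where "D = {\<omega> \<in> space M. W m \<omega> \<le> L}"
    define St where "St = {\<omega> \<in> space M. L < W m \<omega> \<and> W m \<omega> < K}"
    define Sb where "Sb = {\<omega> \<in> space M. \<epsilon> / \<alpha> \<le> S \<omega>}"
    have Sm[measurable]: "S \<in> borel_measurable M" unfolding S_def by measurable
    have N0s[measurable]: "N0 \<in> sets M" unfolding N0_def by measurable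
    have Ds[measurable]: "D \<in> sets M" unfolding D_def by measurable
    have Sts[measurable]: "St \<in> sets M" unfolding St_def by measurable
    have Sbs[measurable]: "Sb \<in> sets M" unfolding Sb_def by measurable
    have sub: "B \<subseteq> N0 \<union> D \<union> St \<union> Sb"
    proof
      fix \<omega> assume \<omega>: "\<omega> \<in> B"
      show "\<omega> \<in> N0 \<union> D \<union> St \<union> Sb"
      proof (rule ccontr)
        assume nin: "\<omega> \<notin> N0 \<union> D \<union> St \<union> Sb"
        have sp: "\<omega> \<in> space M" using \<omega> B_def by auto
        have xpos': "\<not> (\<exists>i. X i \<omega> \<le> 0)" using nin sp unfolding N0_def by blast
        have xpos: "X i \<omega> > 0" for i using xpos' by (meson not_le)
        have hit: "K \<le> wk c L K k0 (\<lambda>i. X i \<omega>) m" using nin sp unfolding D_def St_def W_def by auto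
        have eqS: "(\<Sum>i<m. if L < wk c L K k0 (\<lambda>i. X i \<omega>) i \<and> wk c L K k0 (\<lambda>i. X i \<omega>) i < K
                      then X (i, False) \<omega> / real (wk c L K k0 (\<lambda>i. X i \<omega>) i) else 0) = S \<omega>"
          unfolding S_def fin_def W_def by (intro sum.cong) auto
        have hb: "bd_hitting_time c k0 (\<lambda>i. X i \<omega>) K \<le> ereal (S \<omega>)"
          using wk_hit_bound[of c "\<lambda>i. X i \<omega>" L k0 K m] c_pos xpos LK hit Kpos eqS by simp
        have "ereal \<alpha> * bd_hitting_time c k0 (\<lambda>i. X i \<omega>) K \<le> ereal \<alpha> * ereal (S \<omega>)"
          using al hb by (intro ereal_mult_left_mono) auto
        moreover have "ereal \<epsilon> < ereal \<alpha> * bd_hitting_time c k0 (\<lambda>i. X i \<omega>) K" using \<omega> unfolding B_def by auto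
        ultimately have "ereal \<epsilon> < ereal (\<alpha> * S \<omega>)" by (metis less_le_trans times_ereal.simps(1))
        then have "\<epsilon> < \<alpha> * S \<omega>" by simp
        then have "\<epsilon> / \<alpha> < S \<omega>" using al by (simp add: field_simps)
        then show False using nin sp unfolding Sb_def by auto
      qed
    qed
    have mB: "measure M B \<le> measure M (N0 \<union> D \<union> St \<union> Sb)"
    proof (cases "B \<in> sets M")
      case True then show ?thesis using sub by (intro finite_measure_mono) auto
    next
      case False then show ?thesis by (simp add: measure_notin_sets)
    qed
    also have "\<dots> \<le> measure M N0 + measure M D + measure M St + measure M Sb"
      using measure_Un_le[of "N0 \<union> D \<union> St" M Sb] measure_Un_le[of "N0 \<union> D" M St]
        measure_Un_le[of N0 M D] by simp
    also have "measure M N0 = 0"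
    proof -
      have "(AE \<omega> in M. \<forall>i. X i \<omega> > 0) \<longleftrightarrow> emeasure M N0 = 0"
        by (rule AE_iff_measurable[OF N0s]) (auto simp: N0_def not_less)
      then show ?thesis using X_pos_AE by (simp add: emeasure_eq_measure)
    qed
    also have "measure M D \<le> A" unfolding D_def A_def by (rule dip_bound)
    also have "measure M St \<le> real K / (dl * real m)" unfolding St_def by (rule stuck_bound[OF m])
    also have "measure M Sb \<le> G * \<alpha> / \<epsilon>"
    proof -
      have Si: "integrable M S" unfolding S_def by (intro Bochner_Integration.integrable_sum S_integrable)
      have Snn: "AE \<omega> in M. 0 \<le> S \<omega>"
        using X_pos_AE
      proof (rule AE_mp, intro AE_I2 impI)
        fix \<omega> assume "\<forall>i. 0 < X i \<omega>"
        then show "0 \<le> S \<omega>" unfolding S_def fin_def by (intro sum_nonneg) (auto intro!: mult_nonneg_nonneg less_imp_le)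
      qed
      have "measure M Sb \<le> (\<integral>\<omega>. S \<omega> \<partial>M) / (\<epsilon> / \<alpha>)"
        unfolding Sb_def using al ep by (intro integral_Markov_inequality_measure[OF Si _ Snn, of "space M"]) auto
      also have "\<dots> \<le> G / (\<epsilon> / \<alpha>)"
        using S_expect[OF Ldl L1, of m] al ep unfolding S_def G_def by (intro divide_right_mono) auto
      also have "\<dots> = G * \<alpha> / \<epsilon>" by simp
      finally show ?thesis .
    qed
    finally show ?thesis by simp
  qed
  show ?thesis
  proof (rule ccontr)
    assume "\<not> ?thesis"
    then have d0: "measure M B - (A + G * \<alpha> / \<epsilon>) > 0" unfolding B_def A_def G_def by simp
    define e where "e = measure M B - (A + G * \<alpha> / \<epsilon>)"
    have d: "e > 0" using d0 e_def by simp
    obtain n :: nat where n: "real K / (dl * e) < real n"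
      using reals_Archimedean2 by blast
    define m where "m = Suc n"
    have m0: "m > 0" and mn: "real n < real m" by (auto simp: m_def)
    have q: "dl * e > 0" using d pp_dl(2) by simp
    have "real K / (dl * e) < real m" using n mn by linarith
    then have "real K < real m * (dl * e)" using q by (simp add: divide_less_eq)
    then have "real K < (dl * real m) * e" by (simp add: algebra_simps)
    moreover have "dl * real m > 0" using pp_dl(2) m0 by simp
    ultimately have "real K / (dl * real m) < e" by (simp add: divide_less_eq mult.commute)
    then have "real K / (dl * real m) < measure M B - (A + G * \<alpha> / \<epsilon>)" unfolding e_def .
    then show False using key[OF m0] by linarith
  qed
qed

end

lemma per_N:
  fixes M :: "'a measure" and X :: "nat \<times> bool \<Rightarrow> 'a \<Rightarrow> real" and N :: nat
  assumes prob: "prob_space M"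
    and indep: "prob_space.indep_vars M (\<lambda>_. borel) X UNIV"
    and expo: "\<And>i. distributed M lborel (X i) (exponential_density 1)"
    and a: "a > 0" and phi: "0 < \<phi>0" "\<phi>0 \<le> 1" and ep: "\<epsilon> > 0"
    and r3: "3 \<le> real N / sqrt (ln (real N))" and lnN: "1 < ln (real N)"
    and rK: "real N / sqrt (ln (real N)) \<le> real N * (1 - 1 / sqrt (ln (real N))) - 1"
    and big: "8 * (2 + a) / a + 1 \<le> \<phi>0 * (real N / sqrt (ln (real N)) - 1)"
  shows "measure M {\<omega> \<in> space M. ereal (\<phi>0 / sqrt (ln (real N))) *
                bd_hitting_time (a * \<phi>0) (nat \<lfloor>real N / sqrt (ln (real N))\<rfloor>) (\<lambda>i. X i \<omega>)
                  (nat \<lfloor>real N * (1 - 1 / sqrt (ln (real N)))\<rfloor>) > ereal \<epsilon>}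
    \<le> 1 / (1 + a / 2 * (\<phi>0 * (real N / sqrt (ln (real N)) - 1)))
       + 2 * (2 + a) / (a * \<epsilon>) * ((ln (real N) - ln (real N / sqrt (ln (real N)) - 1)) / sqrt (ln (real N)))"
proof -
  define r where "r = real N / sqrt (ln (real N))"
  define y where "y = real N * (1 - 1 / sqrt (ln (real N)))"
  define k0 where "k0 = nat \<lfloor>r\<rfloor>"
  define KK where "KK = nat \<lfloor>y\<rfloor>"
  define L where "L = k0 div 2"
  define c where "c = a * \<phi>0"
  define sl where "sl = sqrt (ln (real N))"
  have sl: "sl > 1" unfolding sl_def using lnN by simp
  have c: "0 < c" "c \<le> a" unfolding c_def using a phi by (auto simp: mult_left_le)
  have r3': "3 \<le> r" using r3 r_def by simp
  have k0r: "real k0 \<le> r" "r - 1 < real k0" unfolding k0_def using r3' by linarith+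
  have yr: "r + 1 \<le> y" using rK unfolding r_def y_def by simp
  have KKy: "real KK \<le> y" "y - 1 < real KK" unfolding KK_def using yr r3' by linarith+
  have yN: "y \<le> real N"
  proof -
    have h1: "0 \<le> 1 - 1 / sqrt (ln (real N))" "1 - 1 / sqrt (ln (real N)) \<le> 1" using lnN by auto
    show ?thesis unfolding y_def using mult_left_le_one_le[OF _ h1] by (simp add: mult.commute)
  qed
  have k03: "k0 \<ge> 3" using k0r r3' by linarith
  have L1: "1 \<le> L" unfolding L_def using k03 by simp
  have Lk0: "L \<le> k0" unfolding L_def by simp
  have Lr: "real L \<ge> (real k0 - 1) / 2"
  proof -
    have "k0 \<le> 2 * L + 1" unfolding L_def by linarith
    then have "real k0 \<le> 2 * real L + 1" by linarith
    then show ?thesis by simp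
  qed
  have kL: "real (k0 - L) \<ge> real k0 / 2"
  proof -
    have "2 * L \<le> k0" unfolding L_def by linarith
    then have "2 * real L \<le> real k0" by linarith
    then show ?thesis using Lk0 by (simp add: of_nat_diff)
  qed
  have k0K: "k0 \<le> KK" using k0r KKy yr by linarith
  have Kpos: "0 < KK" using k03 k0K by simp
  have ws: "walk_setup M X c L KK k0"
    by (intro walk_setup.intro prob walk_setup_axioms.intro) (use indep expo c Lk0 k0K in auto)
  interpret W: walk_setup M X c L KK k0 by (rule ws)
  have dl: "W.dl = c / (2 + c)" by (simp add: W.dl_def)
  have al: "\<phi>0 / sl > 0" using phi sl by simp
  have Ldl: "4 \<le> W.dl * real L"
  proof -
    have "W.dl \<ge> c / (2 + a)" unfolding dl using c by (intro divide_left_mono) auto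
    have "\<phi>0 * (r - 2) \<ge> 8 * (2 + a) / a" using big phi unfolding r_def by (simp add: algebra_simps)
    then have "c * (real k0 - 1) \<ge> 8 * (2 + a)"
    proof -
      assume h: "\<phi>0 * (r - 2) \<ge> 8 * (2 + a) / a"
      have "\<phi>0 * (r - 2) \<le> \<phi>0 * (real k0 - 1)" using k0r phi by (intro mult_left_mono) auto
      then have "8 * (2 + a) / a \<le> \<phi>0 * (real k0 - 1)" using h by linarith
      then have "a * (8 * (2 + a) / a) \<le> a * (\<phi>0 * (real k0 - 1))" using a by (intro mult_left_mono) auto
      moreover have "a * (8 * (2 + a) / a) = 8 * (2 + a)" using a by simp
      ultimately show ?thesis unfolding c_def by (simp add: mult.assoc)
    qed
    moreover have "c * ((real k0 - 1) / 2) \<le> c * real L" using Lr c by (intro mult_left_mono) auto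
    ultimately have "c * real L \<ge> 4 * (2 + a)" by (simp add: field_simps)
    then have "c / (2 + a) * real L \<ge> 4" using a by (simp add: field_simps)
    moreover have "c / (2 + a) * real L \<le> W.dl * real L"
      using \<open>W.dl \<ge> c / (2 + a)\<close> by (intro mult_right_mono) auto
    ultimately show ?thesis by linarith
  qed
  have mb: "measure M {\<omega> \<in> space M. ereal \<epsilon> < ereal (\<phi>0 / sl) * bd_hitting_time c k0 (\<lambda>i. X i \<omega>) KK}
           \<le> (1 / (1 + c)) ^ (k0 - L) + 2 / W.dl * (ln (real KK) - ln (real k0)) * (\<phi>0 / sl) / \<epsilon>"
    by (rule W.main_bound[OF L1 Ldl Kpos al ep])
  have T1: "(1 / (1 + c)) ^ (k0 - L) \<le> 1 / (1 + a / 2 * (\<phi>0 * (r - 1)))"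
  proof -
    have "1 + real (k0 - L) * c \<le> (1 + c) ^ (k0 - L)" using c by (intro Bernoulli_inequality) auto
    moreover have "a / 2 * (\<phi>0 * (r - 1)) \<le> real (k0 - L) * c"
    proof -
      have "a / 2 * (\<phi>0 * (r - 1)) = c * ((r - 1) / 2)" by (simp add: c_def)
      also have "\<dots> \<le> c * real (k0 - L)" using kL k0r c by (intro mult_left_mono) auto
      finally show ?thesis by (simp add: mult.commute)
    qed
    moreover have "0 \<le> a / 2 * (\<phi>0 * (r - 1))" using a phi r3' by simp
    ultimately have "1 + a / 2 * (\<phi>0 * (r - 1)) \<le> (1 + c) ^ (k0 - L)" by linarith
    then show ?thesis using \<open>0 \<le> a / 2 * (\<phi>0 * (r - 1))\<close>
      by (simp add: power_one_over frac_le)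
  qed
  have T2: "2 / W.dl * (ln (real KK) - ln (real k0)) * (\<phi>0 / sl) / \<epsilon>
      \<le> 2 * (2 + a) / (a * \<epsilon>) * ((ln (real N) - ln (r - 1)) / sl)"
  proof -
    have eq: "2 / W.dl * (ln (real KK) - ln (real k0)) * (\<phi>0 / sl) / \<epsilon>
        = 2 * (2 + c) / (a * \<epsilon>) * ((ln (real KK) - ln (real k0)) / sl)"
    proof -
      have e1: "2 / W.dl = 2 * (2 + c) / c" using c by (simp add: dl)
      have "2 / W.dl * (ln (real KK) - ln (real k0)) * (\<phi>0 / sl) / \<epsilon>
          = 2 * (2 + c) / c * (ln (real KK) - ln (real k0)) * (\<phi>0 / sl) / \<epsilon>" by (simp only: e1)
      also have "\<dots> = 2 * (2 + c) / (a * \<epsilon>) * ((ln (real KK) - ln (real k0)) / sl)"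
        unfolding c_def using a phi ep sl by (simp add: field_simps)
      finally show ?thesis .
    qed
    have D0: "0 \<le> ln (real KK) - ln (real k0)" using k0K k03 by simp
    have D1: "ln (real KK) - ln (real k0) \<le> ln (real N) - ln (r - 1)"
    proof -
      have "ln (real KK) \<le> ln (real N)" using KKy yN Kpos by simp
      moreover have "ln (r - 1) \<le> ln (real k0)" using k0r r3' by simp
      ultimately show ?thesis by linarith
    qed
    have "2 * (2 + c) / (a * \<epsilon>) * ((ln (real KK) - ln (real k0)) / sl)
        \<le> 2 * (2 + a) / (a * \<epsilon>) * ((ln (real N) - ln (r - 1)) / sl)"
      using c a ep sl D0 D1 by (intro mult_mono divide_right_mono) auto
    then show ?thesis using eq by simp
  qed
  show ?thesis
    using mb T1 T2 unfolding r_def y_def k0_def KK_def c_def sl_def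
    by (simp add: add_mono)
qed

theorem proposition3p3:
  fixes a b :: real and \<phi> :: "nat \<Rightarrow> real"
    and M :: "nat \<Rightarrow> 'a measure" and X :: "nat \<Rightarrow> nat \<times> bool \<Rightarrow> 'a \<Rightarrow> real"
  assumes a_pos: "a > 0"
    and phi_bounds: "\<And>N. 0 < \<phi> N \<and> \<phi> N \<le> 1"
    and phi_lim: "(\<lambda>N. - log (real N) (\<phi> N)) \<longlonglongrightarrow> b"
    and b_range: "0 \<le> b" "b < 1"
    and prob: "\<And>N. prob_space (M N)"
    and indep: "\<And>N. prob_space.indep_vars (M N) (\<lambda>_. borel) (X N) UNIV"
    and expo: "\<And>N i. distributed (M N) lborel (X N i) (exponential_density 1)"
  shows "\<forall>\<epsilon>>0. (\<lambda>N. measure (M N)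
           {\<omega> \<in> space (M N).
              ereal (\<phi> N / sqrt (ln (real N))) *
                bd_hitting_time (a * \<phi> N) (nat \<lfloor>real N / sqrt (ln (real N))\<rfloor>) (\<lambda>i. X N i \<omega>)
                  (nat \<lfloor>real N * (1 - 1 / sqrt (ln (real N)))\<rfloor>) > ereal \<epsilon>})
         \<longlonglongrightarrow> 0"
proof (intro allI impI)
  fix \<epsilon> :: real assume ep: "\<epsilon> > 0"
  define e where "e = (1 - b) / 2"
  have e: "0 < e" "e < 1" using b_range by (auto simp: e_def)
  define r where "r N = real N / sqrt (ln (real N))" for N :: nat
  define C where "C = 2 * (2 + a) / (a * \<epsilon>)"
  define Q where "Q N = (ln (real N) - ln (r N - 1)) / sqrt (ln (real N))" for N :: nat
  define H where "H N = real N powr (e - 1) * (r N - 1)" for N :: nat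
  define g where "g N = 1 / (1 + a / 2 * H N) + C * Q N" for N
  have H_lim: "filterlim H at_top sequentially" unfolding H_def r_def using e by real_asymp
  have Q_lim: "Q \<longlonglongrightarrow> 0" unfolding Q_def r_def by real_asymp
  have g_lim: "g \<longlonglongrightarrow> 0"
  proof -
    have "filterlim (\<lambda>N. 1 + a / 2 * H N) at_top sequentially"
      using a_pos by (intro filterlim_tendsto_add_at_top[OF tendsto_const]
          filterlim_tendsto_pos_mult_at_top[OF tendsto_const _ H_lim]) auto
    then have "(\<lambda>N. inverse (1 + a / 2 * H N)) \<longlonglongrightarrow> 0" by (rule tendsto_inverse_0_at_top)
    then have t1: "(\<lambda>N. 1 / (1 + a / 2 * H N)) \<longlonglongrightarrow> 0" by (simp add: inverse_eq_divide)
    have t2: "(\<lambda>N. C * Q N) \<longlonglongrightarrow> 0" using tendsto_mult[OF tendsto_const Q_lim, of C] by simp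
    show ?thesis unfolding g_def using tendsto_add[OF t1 t2] by simp
  qed
  have ev_phi: "eventually (\<lambda>N. real N powr (e - 1) \<le> \<phi> N) sequentially"
  proof -
    have "eventually (\<lambda>N. - log (real N) (\<phi> N) < 1 - e) sequentially"
      using b_range by (intro order_tendstoD(2)[OF phi_lim]) (simp add: e_def field_simps)
    moreover have "eventually (\<lambda>N. N \<ge> 2) sequentially" by (rule eventually_ge_at_top)
    ultimately show ?thesis
    proof (eventually_elim)
      case (elim N)
      have N: "real N > 1" using elim by simp
      have "e - 1 < log (real N) (\<phi> N)" using elim by simp
      then have "real N powr (e - 1) \<le> real N powr (log (real N) (\<phi> N))" using N by (intro powr_mono) auto
      also have "\<dots> = \<phi> N" using N phi_bounds[of N] by (simp add: powr_log_cancel)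
      finally show ?case .
    qed
  qed
  have ev_r3: "eventually (\<lambda>N. 3 \<le> real N / sqrt (ln (real N))) sequentially" by real_asymp
  have ev_ln: "eventually (\<lambda>N. 1 < ln (real N)) sequentially" by real_asymp
  have ev_rK: "eventually (\<lambda>N. real N / sqrt (ln (real N)) \<le> real N * (1 - 1 / sqrt (ln (real N))) - 1) sequentially"
    by real_asymp
  have ev_H: "eventually (\<lambda>N. 8 * (2 + a) / a + 1 \<le> H N) sequentially"
    using H_lim by (simp add: filterlim_at_top)
  have ev: "eventually (\<lambda>N. measure (M N)
           {\<omega> \<in> space (M N).
              ereal (\<phi> N / sqrt (ln (real N))) *
                bd_hitting_time (a * \<phi> N) (nat \<lfloor>real N / sqrt (ln (real N))\<rfloor>) (\<lambda>i. X N i \<omega>)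
                  (nat \<lfloor>real N * (1 - 1 / sqrt (ln (real N)))\<rfloor>) > ereal \<epsilon>} \<le> g N) sequentially"
    using ev_phi ev_r3 ev_ln ev_rK ev_H
  proof eventually_elim
    case (elim N)
    have rr: "r N - 1 \<ge> 0" using elim(2) unfolding r_def by simp
    have Hle: "H N \<le> \<phi> N * (r N - 1)" unfolding H_def using elim(1) rr by (intro mult_right_mono) auto
    have big: "8 * (2 + a) / a + 1 \<le> \<phi> N * (real N / sqrt (ln (real N)) - 1)"
      using elim(5) Hle unfolding r_def by linarith
    note pn = per_N[OF prob[of N] indep[of N] expo[of N] a_pos conjunct1[OF phi_bounds[of N]] conjunct2[OF phi_bounds[of N]] ep
        elim(2) elim(3) elim(4) big]
    have Hpos: "0 \<le> H N" using elim(5) a_pos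
      by (smt (verit, ccfv_SIG) divide_pos_pos)
    have "1 / (1 + a / 2 * (\<phi> N * (r N - 1))) \<le> 1 / (1 + a / 2 * H N)"
    proof -
      have h0: "0 \<le> a / 2 * H N" using Hpos a_pos by simp
      have h1: "a / 2 * H N \<le> a / 2 * (\<phi> N * (r N - 1))" using Hle a_pos by (intro mult_left_mono) auto
      show ?thesis using h0 h1 by (intro divide_left_mono) auto
    qed
    then show ?case using pn unfolding g_def C_def Q_def r_def by linarith
  qed
  show "(\<lambda>N. measure (M N)
           {\<omega> \<in> space (M N).
              ereal (\<phi> N / sqrt (ln (real N))) *
                bd_hitting_time (a * \<phi> N) (nat \<lfloor>real N / sqrt (ln (real N))\<rfloor>) (\<lambda>i. X N i \<omega>)
                  (nat \<lfloor>real N * (1 - 1 / sqrt (ln (real N)))\<rfloor>) > ereal \<epsilon>})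
         \<longlonglongrightarrow> 0"
    by (rule tendsto_sandwich[OF _ ev tendsto_const g_lim]) simp
qed

end
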